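(* Let $G=(X,\Sigma,\longrightarrow,X_0)$ (plant) and $R=(Z,\Sigma,\longrightarrow,Z_0)$ (specification) be automata. If $\mathit{SPR}(G,R)\neq\emptyset$, then $\mathcal{A}(E^{\uparrow}_{(G,R)})\in\mathit{MSPR}(G,R)$.
   Context: An automaton is a 4-tuple $A=(Q,\Sigma,\longrightarrow,Q_0)$ with state set $Q$, finite event set $\Sigma$, ${\longrightarrow}\subseteq Q\times\Sigma\times Q$ and $\emptyset\neq Q_0\subseteq Q$. Write $q\xrightarrow{\sigma}q'$ for $(q,\sigma,q')\in{\longrightarrow}$, $q\xrightarrow{\sigma}$ if some such $q'$ exists; extend to strings. A state is reachable if it is reached from an initial state by some string. Events are partitioned into uncontrollable $\Sigma_{uc}$ and controllable $\Sigma_c$; $\Sigma_r\subseteq\Sigma$ is a fixed set of required events. For a supervisor $S=(Y,\Sigma,\longrightarrow,Y_0)$, $S\|G=(Y\times X,\Sigma,\longrightarrow,Y_0\times X_0)$ with $(y,x)\xrightarrow{\sigma}(y',x')$ iff $y\xrightarrow{\sigma}y'$ and $x\xrightarrow{\sigma}x'$. $S$ is $\Sigma_{uc}$-admissible w.r.t. $G$ if for every reachable $(y,x)$ of $S\|G$ and $\sigma\in\Sigma_{uc}$, $x\xrightarrow{\sigma}$ implies $(y,x)\xrightarrow{\sigma}$. For automata $A_1=(Q_1,\Sigma,\longrightarrow,Q_{01})$, $A_2=(Q_2,\Sigma,\longrightarrow,Q_{02})$, $\Phi\subseteq Q_1\times Q_2$ is a simulation if (initial state) every $q_0\in Q_{01}$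 has $p_0\in Q_{02}$ with $(q_0,p_0)\in\Phi$, and (forward) for all $(q,p)\in\Phi$, $\sigma\in\Sigma$, $q\xrightarrow{\sigma}q'$ there is $p'$ with $p\xrightarrow{\sigma}p'$, $(q',p')\in\Phi$; it is a cc-simulation if moreover ($\Sigma_r$-backward) for all $(q,p)\in\Phi$, $\sigma\in\Sigma_r$, $p\xrightarrow{\sigma}p'$ there is $q'$ with $q\xrightarrow{\sigma}q'$, $(q',p')\in\Phi$. Write $A_1\sqsubseteq A_2$, $A_1\sqsubseteq_{cc}A_2$ if such relations exist. $\mathit{SPR}(G,R)$ is the set of $\Sigma_{uc}$-admissible supervisors $S$ with $S\|G\sqsubseteq_{cc}R$, and $\mathit{MSPR}(G,R)=\{S\in\mathit{SPR}(G,R):\forall S'\in\mathit{SPR}(G,R)\ (S'\|G\sqsubseteq S\|G)\}$. For $W,W'\subseteq X\times Z$, $\sigma\in\Sigma$: $\mathit{match}_{G,R}(W,\sigma,W')$ iff for all $(x,z)\in W$ and $x\xrightarrow{\sigma}x'$ there is $z'$ with $z\xrightarrow{\sigma}z'$ and $(x',z')\in W'$. Define $F_{(G,R)}:\wp(\wp(X\times Z))\to\wp(\wp(X\times Z))$ by: $W\in F_{(G,R)}(E)$ iff $W\in E$ and (1) for every $\sigma\in\Sigma_{uc}$ there is $W'\in E$ with $\mathit{match}_{G,R}(W,\sigma,W')$, and (2) for every $(x,z)\in W$, $\sigma\in\Sigma_r$, $z'$ with $z\xrightarrow{\sigma}z'$ there exist $x'\in X$, $W'\in E$ with $x\xrightarrow{\sigma}x'$,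 $(x',z')\in W'$ and $\mathit{match}_{G,R}(W,\sigma,W')$. $F_{(G,R)}$ is monotone and $E^{\uparrow}_{(G,R)}$ denotes its greatest fixpoint. For $E\subseteq\wp(X\times Z)$ let $E^*=\bigcup_{\widetilde W\in E}\wp(\widetilde W)$ and $\mathrm{Succ}_\sigma(W)=\bigcup_{(x,z)\in W}\{x':x\xrightarrow{\sigma}x'\}\times\{z':z\xrightarrow{\sigma}z'\}$. The automaton $\mathcal{A}(E)=(E^*,\Sigma,\longrightarrow,I_E)$ has $I_E=\{W_0\in E^*:\forall x_0\in X_0\,\exists z_0\in Z_0\,((x_0,z_0)\in W_0)\text{ and }W_0\subseteq X_0\times Z_0\}$ and $W\xrightarrow{\sigma}W'$ iff (i) there exist $(x,z)\in W$, $(x',z')\in W'$ with $x\xrightarrow{\sigma}x'$ and $z\xrightarrow{\sigma}z'$; (ii) $\mathit{match}_{G,R}(W,\sigma,W')$; (iii) $W'\subseteq\mathrm{Succ}_\sigma(W)$. *)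

theory Defs
  imports Main
begin

record ('q, 'e) aut =
  states :: "'q set"
  trans  :: "('q \<times> 'e \<times> 'q) set"
  init   :: "'q set"

definition is_aut :: "'e set \<Rightarrow> ('q, 'e) aut \<Rightarrow> bool" where
  "is_aut Evs A \<longleftrightarrow>
     trans A \<subseteq> states A \<times> Evs \<times> states A \<and>
     init A \<noteq> {} \<and> init A \<subseteq> states A"

inductive reachable :: "('q, 'e) aut \<Rightarrow> 'q \<Rightarrow> bool" for A where
  reach_init: "q \<in> init A \<Longrightarrow> reachable A q"
| reach_step: "reachable A q \<Longrightarrow> (q, \<sigma>, q') \<in> trans A \<Longrightarrow> reachable A q'"

definition enabled :: "('q, 'e) aut \<Rightarrow> 'q \<Rightarrow> 'e \<Rightarrow> bool" where
  "enabled A q \<sigma> \<longleftrightarrow> (\<exists>q'. (q, \<sigma>, q') \<in> trans A)"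

definition sync :: "('y, 'e) aut \<Rightarrow> ('x, 'e) aut \<Rightarrow> ('y \<times> 'x, 'e) aut" where
  "sync S G = \<lparr> states = states S \<times> states G,
      trans = {((y, x), \<sigma>, (y', x')) | y x \<sigma> y' x'.
                 (y, \<sigma>, y') \<in> trans S \<and> (x, \<sigma>, x') \<in> trans G},
      init = init S \<times> init G \<rparr>"

definition admissible :: "'e set \<Rightarrow> ('y, 'e) aut \<Rightarrow> ('x, 'e) aut \<Rightarrow> bool" where
  "admissible Sig_uc S G \<longleftrightarrow>
     (\<forall>y x. reachable (sync S G) (y, x) \<longrightarrow>
        (\<forall>\<sigma>\<in>Sig_uc. enabled G x \<sigma> \<longrightarrow> enabled (sync S G) (y, x) \<sigma>))"

definition is_sim :: "('a, 'e) aut \<Rightarrow> ('b, 'e) aut \<Rightarrow> ('a \<times> 'b) set \<Rightarrow> bool" where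
  "is_sim A1 A2 \<Phi> \<longleftrightarrow>
     \<Phi> \<subseteq> states A1 \<times> states A2 \<and>
     (\<forall>q0\<in>init A1. \<exists>p0\<in>init A2. (q0, p0) \<in> \<Phi>) \<and>
     (\<forall>q p \<sigma> q'. (q, p) \<in> \<Phi> \<longrightarrow> (q, \<sigma>, q') \<in> trans A1 \<longrightarrow>
        (\<exists>p'. (p, \<sigma>, p') \<in> trans A2 \<and> (q', p') \<in> \<Phi>))"

definition is_cc_sim :: "'e set \<Rightarrow> ('a, 'e) aut \<Rightarrow> ('b, 'e) aut \<Rightarrow> ('a \<times> 'b) set \<Rightarrow> bool" where
  "is_cc_sim Sig_r A1 A2 \<Phi> \<longleftrightarrow>
     is_sim A1 A2 \<Phi> \<and>
     (\<forall>q p \<sigma> p'. (q, p) \<in> \<Phi> \<longrightarrow> \<sigma> \<in> Sig_r \<longrightarrow> (p, \<sigma>, p') \<in> trans A2 \<longrightarrow>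
        (\<exists>q'. (q, \<sigma>, q') \<in> trans A1 \<and> (q', p') \<in> \<Phi>))"

definition simulated :: "('a, 'e) aut \<Rightarrow> ('b, 'e) aut \<Rightarrow> bool" where
  "simulated A1 A2 \<longleftrightarrow> (\<exists>\<Phi>. is_sim A1 A2 \<Phi>)"

definition cc_simulated :: "'e set \<Rightarrow> ('a, 'e) aut \<Rightarrow> ('b, 'e) aut \<Rightarrow> bool" where
  "cc_simulated Sig_r A1 A2 \<longleftrightarrow> (\<exists>\<Phi>. is_cc_sim Sig_r A1 A2 \<Phi>)"

text \<open>SPR(G,R): admissible supervisors whose closed loop is cc-simulated by R.
  The supervisor state type 'y is fixed by the type of the resulting set.\<close>
definition SPR :: "'e set \<Rightarrow> 'e set \<Rightarrow> 'e set \<Rightarrow> ('x, 'e) aut \<Rightarrow> ('z, 'e) aut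
                    \<Rightarrow> ('y, 'e) aut set" where
  "SPR Evs Sig_uc Sig_r G R =
     {S. is_aut Evs S \<and> admissible Sig_uc S G \<and> cc_simulated Sig_r (sync S G) R}"

definition match :: "('x, 'e) aut \<Rightarrow> ('z, 'e) aut \<Rightarrow> ('x \<times> 'z) set \<Rightarrow> 'e \<Rightarrow> ('x \<times> 'z) set \<Rightarrow> bool" where
  "match G R W \<sigma> W' \<longleftrightarrow>
     (\<forall>x z x'. (x, z) \<in> W \<longrightarrow> (x, \<sigma>, x') \<in> trans G \<longrightarrow>
        (\<exists>z'. (z, \<sigma>, z') \<in> trans R \<and> (x', z') \<in> W'))"

definition F_op :: "'e set \<Rightarrow> 'e set \<Rightarrow> ('x, 'e) aut \<Rightarrow> ('z, 'e) aut
                   \<Rightarrow> ('x \<times> 'z) set set \<Rightarrow> ('x \<times> 'z) set set" where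
  "F_op Sig_uc Sig_r G R E =
     {W \<in> E.
        (\<forall>\<sigma>\<in>Sig_uc. \<exists>W'\<in>E. match G R W \<sigma> W') \<and>
        (\<forall>x z \<sigma> z'. (x, z) \<in> W \<longrightarrow> \<sigma> \<in> Sig_r \<longrightarrow> (z, \<sigma>, z') \<in> trans R \<longrightarrow>
           (\<exists>x'\<in>states G. \<exists>W'\<in>E. (x, \<sigma>, x') \<in> trans G \<and> (x', z') \<in> W' \<and> match G R W \<sigma> W'))}"

text \<open>Since F_op E \<subseteq> E, intersecting with the lattice carrier gives exactly
  the union of all post-fixpoints E \<subseteq> Pow (X \<times> Z).\<close>
definition E_up :: "'e set \<Rightarrow> 'e set \<Rightarrow> ('x, 'e) aut \<Rightarrow> ('z, 'e) aut \<Rightarrow> ('x \<times> 'z) set set" where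
  "E_up Sig_uc Sig_r G R =
     gfp (\<lambda>E. F_op Sig_uc Sig_r G R E \<inter> Pow (states G \<times> states R))"

definition E_star :: "('x \<times> 'z) set set \<Rightarrow> ('x \<times> 'z) set set" where
  "E_star E = (\<Union>W\<in>E. Pow W)"

definition Succ :: "('x, 'e) aut \<Rightarrow> ('z, 'e) aut \<Rightarrow> 'e \<Rightarrow> ('x \<times> 'z) set \<Rightarrow> ('x \<times> 'z) set" where
  "Succ G R \<sigma> W = (\<Union>(x, z)\<in>W. {x'. (x, \<sigma>, x') \<in> trans G} \<times> {z'. (z, \<sigma>, z') \<in> trans R})"

definition A_of :: "'e set \<Rightarrow> ('x, 'e) aut \<Rightarrow> ('z, 'e) aut \<Rightarrow> ('x \<times> 'z) set set
                    \<Rightarrow> (('x \<times> 'z) set, 'e) aut" where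
  "A_of Evs G R E = \<lparr> states = E_star E,
      trans = {(W, \<sigma>, W') | W \<sigma> W'. W \<in> E_star E \<and> W' \<in> E_star E \<and> \<sigma> \<in> Evs \<and>
                 (\<exists>x z x' z'. (x, z) \<in> W \<and> (x', z') \<in> W' \<and>
                     (x, \<sigma>, x') \<in> trans G \<and> (z, \<sigma>, z') \<in> trans R) \<and>
                 match G R W \<sigma> W' \<and> W' \<subseteq> Succ G R \<sigma> W},
      init = {W0 \<in> E_star E. (\<forall>x0\<in>init G. \<exists>z0\<in>init R. (x0, z0) \<in> W0) \<and>
                 W0 \<subseteq> init G \<times> init R} \<rparr>"

end

theory Submission
  imports Defs
begin

lemma F_mono: "mono (\<lambda>E. F_op Sig_uc Sig_r G R E \<inter> Pow (states G \<times> states R))"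
  unfolding mono_def F_op_def le_fun_def by blast

lemma E_up_unfold: "E_up Sig_uc Sig_r G R = F_op Sig_uc Sig_r G R (E_up Sig_uc Sig_r G R) \<inter> Pow (states G \<times> states R)"
  unfolding E_up_def by (rule gfp_unfold[OF F_mono])

lemma E_up_mem:
  assumes "W \<in> E_up Sig_uc Sig_r G R"
  shows "W \<in> F_op Sig_uc Sig_r G R (E_up Sig_uc Sig_r G R)" "W \<subseteq> states G \<times> states R"
  using assms E_up_unfold[of Sig_uc Sig_r G R] by blast+

lemma E_up_coind:
  assumes "E' \<subseteq> F_op Sig_uc Sig_r G R E' \<inter> Pow (states G \<times> states R)"
  shows "E' \<subseteq> E_up Sig_uc Sig_r G R"
  unfolding E_up_def by (rule gfp_upperbound) (use assms in auto)

lemma sync_trans[simp]: "(((y,x),\<sigma>,(y',x')) \<in> trans (sync S G)) \<longleftrightarrow> (y,\<sigma>,y') \<in> trans S \<and> (x,\<sigma>,x') \<in> trans G"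
  by (simp add: sync_def)

lemma sync_trans2: "((q,\<sigma>,q') \<in> trans (sync S G)) \<longleftrightarrow> (fst q,\<sigma>,fst q') \<in> trans S \<and> (snd q,\<sigma>,snd q') \<in> trans G"
  by (cases q; cases q') (simp add: sync_def)

lemma sync_init[simp]: "init (sync S G) = init S \<times> init G" by (simp add: sync_def)
lemma sync_states[simp]: "states (sync S G) = states S \<times> states G" by (simp add: sync_def)

lemma reach_states:
  assumes "is_aut Evs S" "is_aut Evs G" "reachable (sync S G) q"
  shows "q \<in> states S \<times> states G"
  using assms(3)
proof induction
  case (reach_init q) then show ?case using assms(1,2) by (auto simp: is_aut_def)
next
  case (reach_step q \<sigma> q') then show ?case using assms(1,2)
    by (cases q; cases q') (auto simp: is_aut_def)
qed

lemma Succ_mem: "(x,z) \<in> W \<Longrightarrow> (x,\<sigma>,x') \<in> trans G \<Longrightarrow> (z,\<sigma>,z') \<in> trans R \<Longrightarrow> (x',z') \<in> Succ G R \<sigma> W"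
  unfolding Succ_def by blast

lemma maximal:
  assumes G: "is_aut Evs G" and S': "S' \<in> SPR Evs Sig_uc Sig_r G R"
  shows "simulated (sync S' G) (sync (A_of Evs G R (E_up Sig_uc Sig_r G R)) G)"
proof -
  let ?EU = "E_up Sig_uc Sig_r G R"
  let ?A = "A_of Evs G R ?EU"
  from S' obtain \<Phi> where autS: "is_aut Evs S'" and adm: "admissible Sig_uc S' G"
    and cc: "is_cc_sim Sig_r (sync S' G) R \<Phi>"
    unfolding SPR_def cc_simulated_def by blast
  have \<Phi>sub: "\<Phi> \<subseteq> (states S' \<times> states G) \<times> states R"
    using cc by (simp add: is_cc_sim_def is_sim_def)
  have fwd: "\<And>q p \<sigma> q'. (q,p)\<in>\<Phi> \<Longrightarrow> (q,\<sigma>,q')\<in>trans (sync S' G) \<Longrightarrow> \<exists>p'. (p,\<sigma>,p')\<in>trans R \<and> (q',p')\<in>\<Phi>"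
    using cc unfolding is_cc_sim_def is_sim_def by blast
  have bwd: "\<And>q p \<sigma> p'. (q,p)\<in>\<Phi> \<Longrightarrow> \<sigma> \<in> Sig_r \<Longrightarrow> (p,\<sigma>,p')\<in>trans R \<Longrightarrow> \<exists>q'. (q,\<sigma>,q')\<in>trans (sync S' G) \<and> (q',p')\<in>\<Phi>"
    using cc unfolding is_cc_sim_def by blast
  have ini: "\<And>q0. q0 \<in> init (sync S' G) \<Longrightarrow> \<exists>p0\<in>init R. (q0,p0)\<in>\<Phi>"
    using cc unfolding is_cc_sim_def is_sim_def by blast
  define Wy where "Wy y = {(x,z). reachable (sync S' G) (y,x) \<and> ((y,x),z) \<in> \<Phi>}" for y
  have match_W: "match G R (Wy y) \<sigma> (Wy y')" if "(y,\<sigma>,y') \<in> trans S'" for y \<sigma> y'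
    unfolding match_def
  proof (intro allI impI)
    fix x z x' assume xz: "(x,z) \<in> Wy y" and xx: "(x,\<sigma>,x') \<in> trans G"
    then have r: "reachable (sync S' G) (y,x)" and p: "((y,x),z) \<in> \<Phi>" by (auto simp: Wy_def)
    have t: "((y,x),\<sigma>,(y',x')) \<in> trans (sync S' G)" using that xx by simp
    obtain z' where "(z,\<sigma>,z') \<in> trans R" "((y',x'),z') \<in> \<Phi>" using fwd[OF p t] by blast
    moreover have "reachable (sync S' G) (y',x')" using reach_step[OF r t] .
    ultimately show "\<exists>z'. (z, \<sigma>, z') \<in> trans R \<and> (x', z') \<in> Wy y'" by (auto simp: Wy_def)
  qed
  have post: "range Wy \<subseteq> F_op Sig_uc Sig_r G R (range Wy) \<inter> Pow (states G \<times> states R)"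
  proof
    fix W assume "W \<in> range Wy"
    then obtain y where W: "W = Wy y" by blast
    have pow: "Wy y \<subseteq> states G \<times> states R" using \<Phi>sub by (auto simp: Wy_def)
    have c1: "\<exists>W'\<in>range Wy. match G R (Wy y) \<sigma> W'" if s: "\<sigma> \<in> Sig_uc" for \<sigma>
    proof (cases "\<exists>x z x'. (x,z) \<in> Wy y \<and> (x,\<sigma>,x') \<in> trans G")
      case True
      then obtain x z x' where "(x,z) \<in> Wy y" "(x,\<sigma>,x') \<in> trans G" by blast
      then have "reachable (sync S' G) (y,x)" "enabled G x \<sigma>" by (auto simp: Wy_def enabled_def)
      then have "enabled (sync S' G) (y,x) \<sigma>" using adm s unfolding admissible_def by blast
      then obtain q' where "((y,x),\<sigma>,q') \<in> trans (sync S' G)" unfolding enabled_def by blast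
      then have "(y,\<sigma>,fst q') \<in> trans S'" by (simp add: sync_trans2)
      then show ?thesis using match_W by blast
    next
      case False
      then have "match G R (Wy y) \<sigma> (Wy y)" unfolding match_def by blast
      then show ?thesis by blast
    qed
    have c2: "\<exists>x'\<in>states G. \<exists>W'\<in>range Wy. (x,\<sigma>,x') \<in> trans G \<and> (x',z') \<in> W' \<and> match G R (Wy y) \<sigma> W'"
      if a: "(x,z) \<in> Wy y" "\<sigma> \<in> Sig_r" "(z,\<sigma>,z') \<in> trans R" for x z \<sigma> z'
    proof -
      have r: "reachable (sync S' G) (y,x)" and p: "((y,x),z) \<in> \<Phi>" using a by (auto simp: Wy_def)
      obtain q' where t: "((y,x),\<sigma>,q') \<in> trans (sync S' G)" and q': "(q',z') \<in> \<Phi>" using bwd[OF p a(2,3)] by blast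
      obtain y' x' where qq: "q' = (y',x')" by (cases q')
      have ty: "(y,\<sigma>,y') \<in> trans S'" and tx: "(x,\<sigma>,x') \<in> trans G" using t qq by auto
      have "x' \<in> states G" using tx G by (auto simp: is_aut_def)
      moreover have "(x',z') \<in> Wy y'" using reach_step[OF r t] q' qq by (auto simp: Wy_def)
      ultimately show ?thesis using tx match_W[OF ty] by blast
    qed
    show "W \<in> F_op Sig_uc Sig_r G R (range Wy) \<inter> Pow (states G \<times> states R)"
      unfolding W F_op_def using pow c1 c2 by blast
  qed
  have inE: "Wy y \<in> ?EU" for y using E_up_coind[OF post] by blast
  define \<Psi> where "\<Psi> = {((y,x),(W,x')). x' = x \<and> reachable (sync S' G) (y,x) \<and> W \<in> E_star ?EU \<and> W \<subseteq> Wy y \<and> (\<exists>z. (x,z) \<in> W)}"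
  have "is_sim (sync S' G) (sync ?A G) \<Psi>"
    unfolding is_sim_def
  proof (intro conjI ballI allI impI)
    show "\<Psi> \<subseteq> states (sync S' G) \<times> states (sync ?A G)"
    proof
      fix pr assume "pr \<in> \<Psi>"
      then obtain y x W where pr: "pr = ((y,x),(W,x))" "reachable (sync S' G) (y,x)" "W \<in> E_star ?EU"
        unfolding \<Psi>_def by blast
      then show "pr \<in> states (sync S' G) \<times> states (sync ?A G)"
        using reach_states[OF autS G pr(2)] by (auto simp: A_of_def)
    qed
  next
    fix q0 assume q0: "q0 \<in> init (sync S' G)"
    obtain y0 x0 where qq: "q0 = (y0,x0)" by (cases q0)
    have y0: "y0 \<in> init S'" and x0: "x0 \<in> init G" using q0 qq by auto
    define W0 where "W0 = {(x,z). x \<in> init G \<and> z \<in> init R \<and> ((y0,x),z) \<in> \<Phi>}"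
    have sub: "W0 \<subseteq> Wy y0" unfolding W0_def Wy_def using y0 by (auto intro: reach_init)
    have cov: "\<forall>x\<in>init G. \<exists>z\<in>init R. (x,z) \<in> W0"
      using ini y0 unfolding W0_def by fastforce
    have st: "W0 \<in> E_star ?EU" using sub inE unfolding E_star_def by blast
    have "W0 \<in> init ?A" using st cov unfolding A_of_def W0_def by auto
    moreover have "(q0,(W0,x0)) \<in> \<Psi>" unfolding \<Psi>_def qq using st sub cov x0 y0
      by (auto intro: reach_init)
    ultimately show "\<exists>p0\<in>init (sync ?A G). (q0,p0) \<in> \<Psi>" using x0 by auto
  next
    fix q p \<sigma> q' assume qp: "(q,p) \<in> \<Psi>" and t: "(q,\<sigma>,q') \<in> trans (sync S' G)"
    obtain y x W where qq: "q = (y,x)" "p = (W,x)" and r: "reachable (sync S' G) (y,x)"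
      and Ws: "W \<in> E_star ?EU" and Wsub: "W \<subseteq> Wy y" and z: "\<exists>z. (x,z) \<in> W"
      using qp unfolding \<Psi>_def by blast
    obtain y' x' where qq': "q' = (y',x')" by (cases q')
    have ty: "(y,\<sigma>,y') \<in> trans S'" and tx: "(x,\<sigma>,x') \<in> trans G" using t qq qq' by auto
    have ev: "\<sigma> \<in> Evs" using tx G by (auto simp: is_aut_def)
    define W' where "W' = Wy y' \<inter> Succ G R \<sigma> W"
    have mW: "match G R W \<sigma> (Wy y')" using match_W[OF ty] Wsub unfolding match_def by blast
    have m: "match G R W \<sigma> W'" using mW unfolding match_def W'_def Succ_def by blast
    have W's: "W' \<in> E_star ?EU" using inE[of y'] unfolding E_star_def W'_def by blast
    obtain z where xz: "(x,z) \<in> W" using z by blast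
    obtain z' where zz: "(z,\<sigma>,z') \<in> trans R" "(x',z') \<in> W'" using m xz tx unfolding match_def by blast
    have tA: "(W,\<sigma>,W') \<in> trans ?A"
      unfolding A_of_def using Ws W's ev xz zz tx m by (auto simp: W'_def)
    have "(q',(W',x')) \<in> \<Psi>" unfolding \<Psi>_def qq' using reach_step[OF r t[unfolded qq qq']] W's zz
      by (auto simp: W'_def)
    moreover have "(p,\<sigma>,(W',x')) \<in> trans (sync ?A G)" using tA tx qq by simp
    ultimately show "\<exists>p'. (p,\<sigma>,p') \<in> trans (sync ?A G) \<and> (q',p') \<in> \<Psi>" by blast
  qed
  then show ?thesis unfolding simulated_def by blast
qed

theorem theorem2:
  fixes Evs Sig_uc Sig_r :: "'e set"
    and G :: "('x, 'e) aut" and R :: "('z, 'e) aut"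
  assumes "finite Evs" and "Sig_uc \<subseteq> Evs" and "Sig_r \<subseteq> Evs"
    and "is_aut Evs G" and "is_aut Evs R"
    and "SPR Evs Sig_uc Sig_r G R \<noteq> ({} :: ('w, 'e) aut set)"
  shows "A_of Evs G R (E_up Sig_uc Sig_r G R) \<in> SPR Evs Sig_uc Sig_r G R
       \<and> (\<forall>S' :: ('y, 'e) aut. S' \<in> SPR Evs Sig_uc Sig_r G R \<longrightarrow>
            simulated (sync S' G) (sync (A_of Evs G R (E_up Sig_uc Sig_r G R)) G))"
proof -
  let ?EU = "E_up Sig_uc Sig_r G R"
  let ?A = "A_of Evs G R ?EU"
  note G = assms(4)
  from assms(6) obtain S :: "('w,'e) aut" where S: "S \<in> SPR Evs Sig_uc Sig_r G R" by blast
  have max: "\<forall>S' :: ('y, 'e) aut. S' \<in> SPR Evs Sig_uc Sig_r G R \<longrightarrow> simulated (sync S' G) (sync ?A G)"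
    using maximal[OF G] by blast
  have "init S \<noteq> {}" using S by (simp add: SPR_def is_aut_def)
  moreover have "init G \<noteq> {}" using G by (simp add: is_aut_def)
  ultimately obtain q0 where q0: "q0 \<in> init (sync S G)" by auto
  obtain \<Theta> where "is_sim (sync S G) (sync ?A G) \<Theta>" using maximal[OF G S] unfolding simulated_def by blast
  then obtain p0 where "p0 \<in> init (sync ?A G)" using q0 unfolding is_sim_def by blast
  then have iniA: "init ?A \<noteq> {}" by auto
  have aut: "is_aut Evs ?A" using iniA unfolding is_aut_def by (auto simp: A_of_def)
  have inv: "W \<in> E_star ?EU \<and> (\<exists>z. (x,z) \<in> W)" if "reachable (sync ?A G) (W,x)" for W x
  proof -
    have "fst q \<in> E_star ?EU \<and> (\<exists>z. (snd q,z) \<in> fst q)" if "reachable (sync ?A G) q" for q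
      using that
    proof induction
      case (reach_init q) then show ?case by (cases q) (auto simp: A_of_def)
    next
      case (reach_step q \<sigma> q')
      then have "(fst q,\<sigma>,fst q') \<in> trans ?A" "(snd q,\<sigma>,snd q') \<in> trans G" by (auto simp: sync_trans2)
      then have tA: "(fst q,\<sigma>,fst q') \<in> trans ?A" and tx: "(snd q,\<sigma>,snd q') \<in> trans G" .
      then have m: "match G R (fst q) \<sigma> (fst q')" and st: "fst q' \<in> E_star ?EU"
        by (simp_all add: A_of_def)
      obtain z where "(snd q, z) \<in> fst q" using reach_step.IH by blast
      then show ?case using m st tx unfolding match_def by blast
    qed
    from this[OF that] show ?thesis by simp
  qed
  have sucW: "\<exists>W'. (W,\<sigma>,W') \<in> trans ?A \<and> (x',z') \<in> W'"
    if W: "W \<in> E_star ?EU" and xz: "(x,z) \<in> W" and ev: "\<sigma> \<in> Evs"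
      and tx: "(x,\<sigma>,x') \<in> trans G" and tz: "(z,\<sigma>,z') \<in> trans R"
      and W'': "W'' \<in> ?EU" and mm: "match G R Wt \<sigma> W''" and WWt: "W \<subseteq> Wt"
      and xz': "(x',z') \<in> W''" for W \<sigma> x z x' z' W'' Wt
  proof -
    define W' where "W' = W'' \<inter> Succ G R \<sigma> W"
    have m: "match G R W \<sigma> W'" unfolding match_def
    proof (intro allI impI)
      fix a b a' assume ab: "(a,b) \<in> W" and ta: "(a,\<sigma>,a') \<in> trans G"
      obtain b' where "(b,\<sigma>,b') \<in> trans R" "(a',b') \<in> W''"
        using mm WWt ab ta unfolding match_def by blast
      then show "\<exists>b'. (b,\<sigma>,b') \<in> trans R \<and> (a',b') \<in> W'"
        using Succ_mem[OF ab ta] unfolding W'_def by blast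
    qed
    have W's: "W' \<in> E_star ?EU" using W'' unfolding E_star_def W'_def by blast
    have in': "(x',z') \<in> W'" using xz' Succ_mem[OF xz tx tz] unfolding W'_def by blast
    have "(W,\<sigma>,W') \<in> trans ?A"
    proof -
      have "W' \<subseteq> Succ G R \<sigma> W" unfolding W'_def by blast
      then show ?thesis using W W's ev xz in' tx tz m by (simp add: A_of_def) blast
    qed
    then show ?thesis using in' by blast
  qed
  have adm: "admissible Sig_uc ?A G"
    unfolding admissible_def
  proof (intro allI impI ballI)
    fix W x \<sigma> assume r: "reachable (sync ?A G) (W,x)" and s: "\<sigma> \<in> Sig_uc" and en: "enabled G x \<sigma>"
    obtain x' where tx: "(x,\<sigma>,x') \<in> trans G" using en unfolding enabled_def by blast
    have Ws: "W \<in> E_star ?EU" and "\<exists>z. (x,z) \<in> W" using inv[OF r] by auto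
    then obtain z where xz: "(x,z) \<in> W" by blast
    obtain Wt where Wt: "Wt \<in> ?EU" "W \<subseteq> Wt" using Ws unfolding E_star_def by blast
    obtain W'' where W'': "W'' \<in> ?EU" "match G R Wt \<sigma> W''"
      using E_up_mem(1)[OF Wt(1)] s unfolding F_op_def by blast
    obtain z' where "(z,\<sigma>,z') \<in> trans R" "(x',z') \<in> W''" using W''(2) Wt(2) xz tx unfolding match_def by blast
    then obtain W' where "(W,\<sigma>,W') \<in> trans ?A"
      using sucW[OF Ws xz _ tx _ W''(1) W''(2) Wt(2)] s assms(2) by blast
    then have "((W,x),\<sigma>,(W',x')) \<in> trans (sync ?A G)" using tx by simp
    then show "enabled (sync ?A G) (W,x) \<sigma>" unfolding enabled_def by blast
  qed
  define \<Phi> where "\<Phi> = {((W,x),z). W \<in> E_star ?EU \<and> (x,z) \<in> W}"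
  have "is_cc_sim Sig_r (sync ?A G) R \<Phi>"
    unfolding is_cc_sim_def is_sim_def
  proof (intro conjI ballI allI impI)
    show "\<Phi> \<subseteq> states (sync ?A G) \<times> states R"
    proof
      fix pr assume "pr \<in> \<Phi>"
      then obtain W x z where pr: "pr = ((W,x),z)" "W \<in> E_star ?EU" "(x,z) \<in> W" unfolding \<Phi>_def by blast
      then obtain Wt where "Wt \<in> ?EU" "W \<subseteq> Wt" unfolding E_star_def by blast
      then have "x \<in> states G" "z \<in> states R" using E_up_mem(2) pr(3) by blast+
      then show "pr \<in> states (sync ?A G) \<times> states R" using pr by (auto simp: A_of_def)
    qed
  next
    fix q0 assume "q0 \<in> init (sync ?A G)"
    then show "\<exists>p0\<in>init R. (q0,p0) \<in> \<Phi>" unfolding \<Phi>_def by (cases q0) (auto simp: A_of_def)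
  next
    fix q p \<sigma> q' assume qp: "(q,p) \<in> \<Phi>" and t: "(q,\<sigma>,q') \<in> trans (sync ?A G)"
    then have "(fst q,\<sigma>,fst q') \<in> trans ?A" "(snd q,\<sigma>,snd q') \<in> trans G" by (auto simp: sync_trans2)
    then show "\<exists>p'. (p,\<sigma>,p') \<in> trans R \<and> (q',p') \<in> \<Phi>"
      using qp unfolding \<Phi>_def A_of_def match_def by (cases q; cases q') fastforce
  next
    fix q p \<sigma> p' assume qp: "(q,p) \<in> \<Phi>" and s: "\<sigma> \<in> Sig_r" and tz: "(p,\<sigma>,p') \<in> trans R"
    obtain W x where qq: "q = (W,x)" by (cases q)
    have Ws: "W \<in> E_star ?EU" and xz: "(x,p) \<in> W" using qp qq unfolding \<Phi>_def by auto
    obtain Wt where Wt: "Wt \<in> ?EU" "W \<subseteq> Wt" using Ws unfolding E_star_def by blast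
    obtain x' W'' where "x' \<in> states G" "W'' \<in> ?EU" "(x,\<sigma>,x') \<in> trans G" "(x',p') \<in> W''" "match G R Wt \<sigma> W''"
      using E_up_mem(1)[OF Wt(1)] s tz xz Wt(2) unfolding F_op_def by blast
    moreover then obtain W' where "(W,\<sigma>,W') \<in> trans ?A" "(x',p') \<in> W'"
      using sucW[OF Ws xz _ _ tz _ _ Wt(2)] s assms(3) by blast
    moreover have "W' \<in> E_star ?EU" if "(W,\<sigma>,W') \<in> trans ?A" for W' using that by (auto simp: A_of_def)
    ultimately show "\<exists>q'. (q,\<sigma>,q') \<in> trans (sync ?A G) \<and> (q',p') \<in> \<Phi>"
      unfolding qq \<Phi>_def by auto
  qed
  then have "?A \<in> SPR Evs Sig_uc Sig_r G R"
    unfolding SPR_def cc_simulated_def using aut adm by blast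
  then show ?thesis using max by blast
qed

end
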